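(* Let $\mathcal P$ be a CPOS $2n$-gon which is equal-area, and write $P_{i+n+1}-P_{i+n}=-\alpha_i(P_{i+1}-P_i)$ with $\alpha_i>0$, $1\le i\le n$. Then either $\alpha_i=1$ for all $i$, in which case $\mathcal P$ is symmetric with respect to a point, or $n$ is odd and there is $\alpha>0$, $\alpha\ne1$, such that $\alpha_i=\alpha$ for all odd $i$ and $\alpha_i=\alpha^{-1}$ for all even $i$ ($1\le i\le n$).
   Context: A CPOS $2n$-gon ($n\ge2$) is a closed planar polygon $\mathcal P$ with vertices $P_1,\dots,P_{2n}$ (indices mod $2n$) bounding a convex region, with no two adjacent sides parallel, with $P_{i+n+1}-P_{i+n}$ parallel to $P_{i+1}-P_i$ for all $i$ (by convexity these are then antiparallel), and positively oriented: $[P_{i+1}-P_i,P_{j+1}-P_j]>0$ for $1\le i<j\le n$ ($[\cdot,\cdot]$ = determinant). $\mathcal P$ is equal-area if $[P_{i+1}-P_i,P_i-P_{i-1}]$ is the same for all $i$. $\mathcal P$ is symmetric with respect to $O$ if $P_{i+n}-O=O-P_i$ for all $i$. *)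

theory Defs
  imports Complex_Main
begin

text \<open>Points of the plane are complex numbers; det2 u v is the determinant [u,v].
  A 2n-gon is a map P :: nat => complex, periodic with period 2n (indices mod 2n);
  the vertices are P 1, ..., P (2n) and P 0 = P (2n).\<close>

definition det2 :: "complex \<Rightarrow> complex \<Rightarrow> real" where
  "det2 u v = Re u * Im v - Im u * Re v"

definition cpos :: "nat \<Rightarrow> (nat \<Rightarrow> complex) \<Rightarrow> bool" where
  "cpos n P \<longleftrightarrow>
     n \<ge> 2 \<and>
     (\<forall>i. P (i + 2*n) = P i) \<and>
     \<comment> \<open>convex: all vertices lie (weakly) on one side of the line through each side\<close>
     (\<forall>i\<in>{1..2*n}. (\<forall>j\<in>{1..2*n}. det2 (P (i+1) - P i) (P j - P i) \<ge> 0) \<or>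
                    (\<forall>j\<in>{1..2*n}. det2 (P (i+1) - P i) (P j - P i) \<le> 0)) \<and>
     \<comment> \<open>no two adjacent sides parallel\<close>
     (\<forall>i\<in>{1..2*n}. det2 (P (i+1) - P i) (P i - P (i-1)) \<noteq> 0) \<and>
     \<comment> \<open>opposite sides parallel\<close>
     (\<forall>i\<in>{1..n}. det2 (P (i+n+1) - P (i+n)) (P (i+1) - P i) = 0) \<and>
     \<comment> \<open>positively oriented\<close>
     (\<forall>i j. 1 \<le> i \<and> i < j \<and> j \<le> n \<longrightarrow> det2 (P (i+1) - P i) (P (j+1) - P j) > 0)"

definition equal_area :: "nat \<Rightarrow> (nat \<Rightarrow> complex) \<Rightarrow> bool" where
  "equal_area n P \<longleftrightarrow>
     (\<exists>c. \<forall>i\<in>{1..2*n}. det2 (P (i+1) - P i) (P i - P (i-1)) = c)"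

definition symmetric_wrt :: "nat \<Rightarrow> (nat \<Rightarrow> complex) \<Rightarrow> complex \<Rightarrow> bool" where
  "symmetric_wrt n P Q \<longleftrightarrow> (\<forall>i. P (i+n) - Q = Q - P i)"

end

theory Submission
  imports Defs
begin

lemma det2_sl: "det2 (-(of_real a * u)) w = -a * det2 u w"
  by (simp add: det2_def algebra_simps)
lemma det2_sr: "det2 u (-(of_real a * w)) = -a * det2 u w"
  by (simp add: det2_def algebra_simps)
lemma det2_anti: "det2 u w = - det2 w u"
  by (simp add: det2_def algebra_simps)

lemma nper:
  fixes g :: "nat \<Rightarrow> complex"
  assumes "\<And>i. g (i+n) = g i" "\<And>i. 1 \<le> i \<Longrightarrow> i \<le> n \<Longrightarrow> g i = 0" "n \<ge> 1"
  shows "g i = 0"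
proof -
  have k: "g (k*n + r) = g r" for k r
  proof (induction k)
    case (Suc k)
    have "Suc k * n + r = (k*n + r) + n" by simp
    then show ?case using Suc assms(1)[of "k*n+r"] by metis
  qed simp
  have "g i = g (i mod n)" using k[of "i div n" "i mod n"] by simp
  moreover have "g (i mod n) = 0"
  proof (cases "i mod n = 0")
    case True then show ?thesis using assms(1)[of 0] assms(2)[of n] assms(3) by simp
  next
    case False then show ?thesis using assms(2)[of "i mod n"] assms(3)
      by (simp add: less_imp_le_nat)
  qed
  ultimately show ?thesis by simp
qed

theorem mainTheorem4:
  fixes n :: nat and P :: "nat \<Rightarrow> complex" and \<alpha> :: "nat \<Rightarrow> real"
  assumes "cpos n P"
    and "equal_area n P"
    and "\<forall>i\<in>{1..n}. \<alpha> i > 0 \<and>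
           P (i+n+1) - P (i+n) = - (of_real (\<alpha> i) * (P (i+1) - P i))"
  shows "((\<forall>i\<in>{1..n}. \<alpha> i = 1) \<and> (\<exists>Q. symmetric_wrt n P Q)) \<or>
         (odd n \<and> (\<exists>a>0. a \<noteq> 1 \<and>
            (\<forall>i\<in>{1..n}. (odd i \<longrightarrow> \<alpha> i = a) \<and> (even i \<longrightarrow> \<alpha> i = inverse a))))"
proof -
  have n2: "n \<ge> 2" and per: "\<And>i. P (i + 2*n) = P i"
    and pos: "\<And>i j. 1 \<le> i \<Longrightarrow> i < j \<Longrightarrow> j \<le> n \<Longrightarrow> det2 (P (i+1) - P i) (P (j+1) - P j) > 0"
    using assms(1) unfolding cpos_def by auto
  obtain c where c: "\<And>i. 1 \<le> i \<Longrightarrow> i \<le> 2*n \<Longrightarrow> det2 (P (i+1) - P i) (P i - P (i-1)) = c"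
    using assms(2) unfolding equal_area_def by auto
  have A: "\<And>i. 1 \<le> i \<Longrightarrow> i \<le> n \<Longrightarrow> \<alpha> i > 0"
    and B: "\<And>i. 1 \<le> i \<Longrightarrow> i \<le> n \<Longrightarrow> P (i+n+1) - P (i+n) = - (of_real (\<alpha> i) * (P (i+1) - P i))"
    using assms(3) by auto
  have c2: "det2 (P 3 - P 2) (P 2 - P 1) = c" using c[of 2] n2 by (simp add: numeral_3_eq_3 numeral_2_eq_2)
  have p12: "det2 (P 2 - P 1) (P 3 - P 2) > 0" using pos[of 1 2] n2 by (simp add: numeral_3_eq_3 numeral_2_eq_2)
  have cneg: "c < 0" using c2 p12 det2_anti[of "P 3 - P 2" "P 2 - P 1"] by simp
  have step: "\<alpha> i * \<alpha> (i-1) = 1" if "2 \<le> i" "i \<le> n" for i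
  proof -
    have e1: "det2 (P (i+n+1) - P (i+n)) (P (i+n) - P (i+n-1)) = c"
      using c[of "i+n"] that by simp
    have "P (i+n) - P (i+n-1) = P ((i-1)+n+1) - P ((i-1)+n)"
      using that by (simp add: Suc_diff_le)
    also have "\<dots> = - (of_real (\<alpha> (i-1)) * (P ((i-1)+1) - P (i-1)))"
      using B[of "i-1"] that by simp
    also have "(i-1)+1 = i" using that by simp
    finally have e2: "P (i+n) - P (i+n-1) = - (of_real (\<alpha> (i-1)) * (P i - P (i-1)))" .
    have e3: "det2 (P (i+1) - P i) (P i - P (i-1)) = c" using c[of i] that by simp
    have Bi: "P (i+n+1) - P (i+n) = - (of_real (\<alpha> i) * (P (i+1) - P i))" using B[of i] that by simp
    have "det2 (P (i+n+1) - P (i+n)) (P (i+n) - P (i+n-1)) = \<alpha> i * \<alpha> (i-1) * det2 (P (i+1) - P i) (P i - P (i-1))"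
      unfolding Bi e2 det2_sl det2_sr by simp
    hence "\<alpha> i * \<alpha> (i-1) * c = c" using e1 e3 by simp
    thus ?thesis using cneg by simp
  qed
  have d1n: "det2 (P (1+1) - P 1) (P (n+1) - P n) > 0" using pos[of 1 n] n2 by simp
  have a1: "- \<alpha> 1 * det2 (P (1+1) - P 1) (P (n+1) - P n) = c"
  proof -
    have e: "det2 (P (n+1+1) - P (n+1)) (P (n+1) - P (n+1-1)) = c" using c[of "n+1"] n2 by simp
    have "P (n+1+1) - P (n+1) = - (of_real (\<alpha> 1) * (P (1+1) - P 1))"
      using B[of 1] n2 by (simp add: add.commute)
    with e have "det2 (- (of_real (\<alpha> 1) * (P (1+1) - P 1))) (P (n+1) - P n) = c" by simp
    thus ?thesis by (simp add: det2_sl)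
  qed
  have an: "- \<alpha> n * det2 (P (1+1) - P 1) (P (n+1) - P n) = c"
  proof -
    have e: "det2 (P (1+1) - P 1) (P 1 - P (1-1)) = c" using c[of 1] n2 by simp
    have p0: "P 0 = P (2*n)" using per[of 0] by simp
    have p1: "P 1 = P (n+n+1)" using per[of 1] by (simp add: mult_2 add.commute)
    have "P 1 - P 0 = P (n+n+1) - P (n+n)" using p0 p1 by (simp add: mult_2)
    also have "\<dots> = - (of_real (\<alpha> n) * (P (n+1) - P n))" using B[of n] n2 by simp
    finally have "P 1 - P (1-1) = - (of_real (\<alpha> n) * (P (n+1) - P n))" by simp
    with e show ?thesis by (simp add: det2_sr)
  qed
  have "(\<alpha> 1 - \<alpha> n) * det2 (P (1+1) - P 1) (P (n+1) - P n) = 0" using a1 an by (simp only: left_diff_distrib)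
  hence a1n: "\<alpha> 1 = \<alpha> n" using d1n by simp
  define a where "a = \<alpha> 1"
  have apos: "a > 0" using A[of 1] n2 a_def by simp
  have alf: "\<alpha> i = (if odd i then a else inverse a)" if "1 \<le> i" "i \<le> n" for i
    using that
  proof (induction i)
    case 0 then show ?case by simp
  next
    case (Suc k)
    show ?case
    proof (cases "k = 0")
      case True then show ?thesis by (simp add: a_def)
    next
      case False
      with Suc have ih: "\<alpha> k = (if odd k then a else inverse a)" by simp
      have "\<alpha> (Suc k) * \<alpha> k = 1" using step[of "Suc k"] Suc.prems False by simp
      then show ?thesis using ih apos by (auto simp: field_simps)
    qed
  qed
  show ?thesis
  proof (cases "a = 1")
    case False
    have "odd n"
    proof
      assume "even n"
      hence "\<alpha> n = inverse a" using alf[of n] n2 by simp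
      hence "a = inverse a" using a1n a_def by simp
      hence "a * a = a * inverse a" by simp
      hence "a * a = 1" using apos by simp
      hence "(a - 1) * (a + 1) = 0" by (simp add: algebra_simps)
      hence "a = 1" using apos by simp
      with False show False by simp
    qed
    then show ?thesis using alf apos False by auto
  next
    case True
    hence all1: "\<forall>i\<in>{1..n}. \<alpha> i = 1" using alf by auto
    define f where "f i = P (i+n) + P i" for i
    define g where "g i = f (i+1) - f i" for i
    have fp: "f (i+n) = f i" for i
    proof -
      have "i+n+n = i + 2*n" by simp
      then show ?thesis unfolding f_def using per[of i] by (metis add.commute)
    qed
    have gp: "g (i+n) = g i" for i
    proof -
      have "i+n+1 = (i+1)+n" by simp
      then show ?thesis unfolding g_def using fp[of i] fp[of "i+1"] by simp
    qed
    have g0: "g i = 0" if "1 \<le> i" "i \<le> n" for i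
      using B[OF that] all1 that unfolding g_def f_def by (simp add: algebra_simps)
    have gz: "g i = 0" for i using nper[of g n i] gp g0 n2 by auto
    have fc: "f i = f 0" for i
      by (induction i) (use gz in \<open>auto simp: g_def\<close>)
    have "symmetric_wrt n P (f 0 / 2)"
      unfolding symmetric_wrt_def
    proof (intro allI)
      fix i have "P (i+n) + P i = f 0" using fc[of i] f_def by simp
      then have h: "f 0 = P (i+n) + P i" by simp
      have "P (i+n) - (P (i+n) + P i) / 2 = (P (i+n) + P i) / 2 - P i" by (simp add: field_simps)
      then show "P (i + n) - f 0 / 2 = f 0 / 2 - P i" by (simp only: h)
    qed
    then show ?thesis using all1 by blast
  qed
qed

end
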